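(* Let $D$ be a connected oriented virtual singular link diagram with $k$ components, and let $S_0$ be the state of $D$ obtained by applying the oriented resolution at every classical and singular crossing of $D$. Then $\overline{R}(S_0)\in\mathbb{Z}[A^4,A^{-4}]\cdot A^{2k}$.
   Context: An oriented virtual singular link diagram is a generic immersion of finitely many oriented circles (its components) into $\mathbb{R}^2$ with finitely many transverse double points, each decorated as a classical crossing (with over/under information and the usual sign $\pm1$), a singular crossing, or a virtual crossing. The diagram is connected if it is not a disjoint union of two nonempty diagrams (i.e., its image in the plane is connected). At a classical or singular crossing, the oriented resolution replaces it by two disjoint arcs respecting orientation; the disoriented resolution replaces it by one arc joining the two incoming ends with a sink bivalent vertex and one arc joining the two outgoing ends with a source bivalent vertex. Virtual crossings are kept. A state $S$ of $D$ is a choice of resolution at every classical and singular crossing; it is a collection of immersed closed curves (all intersections virtual). $\|S\|$ = number of closed curves of $S$; $a(S)$ = #(negative classical crossings with oriented resolution) $-$ #(positive classical crossings with oriented resolution); $b(S)$ the same for disoriented resolutions; $\alpha(S),\beta(S)$ = numbers of singular crossings with oriented, resp. disoriented, resolution. The weighted state contribution is $\overline{R}(S)=A^{2a(S)+4b(S)}(-A^2-A^{-2})^{\alpha(S)+\|S\|}(-A^4-A^{-4})^{\beta(S)}h^{\frac{1-i(S)}{2}}$, where $i(S)\in\{\pm1\}$ is the parity of $S$: choosing a map $\tau$ from the edges of $S$ (arcs between consecutive bivalent vertices; a closed curve without vertices is one edge) to $\{\pm1\}$ with different values on edges sharing a vertex, $i(S)$ is the product over all virtual crossings $v$ of $\tau(e)\tau(e')$,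 where $e,e'$ are the edges meeting at $v$ (independent of $\tau$). (For $S_0$, which has no bivalent vertices, $i(S_0)=1$.) *)

theory Defs
  imports "HOL-Analysis.Analysis" "HOL-Computational_Algebra.Formal_Laurent_Series"
begin

(* Plane = complex numbers.  A diagram with k components is a family of
   closed curves gamma j (j < k), each 1-periodic on the real line,
   parameter domain [0,1) representing the circle. *)

datatype xing = Classical "nat \<times> real" \<comment> \<open>classical; argument = the over-passing preimage\<close>
              | Singular | Virtual

definition preim :: "nat \<Rightarrow> (nat \<Rightarrow> real \<Rightarrow> complex) \<Rightarrow> complex \<Rightarrow> (nat \<times> real) set" where
  "preim k \<gamma> z = {(j,t). j < k \<and> t \<in> {0..<1} \<and> \<gamma> j t = z}"

definition dpoints :: "nat \<Rightarrow> (nat \<Rightarrow> real \<Rightarrow> complex) \<Rightarrow> complex set" where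
  "dpoints k \<gamma> = {z. card (preim k \<gamma> z) = 2}"

definition tangent :: "(nat \<Rightarrow> real \<Rightarrow> complex) \<Rightarrow> nat \<times> real \<Rightarrow> complex" where
  "tangent \<gamma> p = vector_derivative (\<gamma> (fst p)) (at (snd p))"

(* determinant of (u,v) viewed as vectors in R^2 *)
definition cross2 :: "complex \<Rightarrow> complex \<Rightarrow> real" where
  "cross2 u v = Im (cnj u * v)"

definition vs_diagram :: "nat \<Rightarrow> (nat \<Rightarrow> real \<Rightarrow> complex) \<Rightarrow> (complex \<Rightarrow> xing) \<Rightarrow> bool" where
  "vs_diagram k \<gamma> dec \<longleftrightarrow>
     (\<forall>j<k. (\<forall>t. \<gamma> j (t + 1) = \<gamma> j t)
          \<and> \<gamma> j differentiable_on UNIV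
          \<and> continuous_on UNIV (\<lambda>t. vector_derivative (\<gamma> j) (at t))
          \<and> (\<forall>t. vector_derivative (\<gamma> j) (at t) \<noteq> 0))
   \<and> (\<forall>z. finite (preim k \<gamma> z) \<and> card (preim k \<gamma> z) \<le> 2)
   \<and> finite (dpoints k \<gamma>)
   \<and> (\<forall>z \<in> dpoints k \<gamma>. \<forall>p \<in> preim k \<gamma> z. \<forall>q \<in> preim k \<gamma> z.
          p \<noteq> q \<longrightarrow> cross2 (tangent \<gamma> p) (tangent \<gamma> q) \<noteq> 0)
   \<and> (\<forall>z \<in> dpoints k \<gamma>. \<forall>ov. dec z = Classical ov \<longrightarrow> ov \<in> preim k \<gamma> z)"

definition vs_connected :: "nat \<Rightarrow> (nat \<Rightarrow> real \<Rightarrow> complex) \<Rightarrow> bool" where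
  "vs_connected k \<gamma> \<longleftrightarrow> connected (\<Union>j<k. \<gamma> j ` {0..1})"

definition partner :: "nat \<Rightarrow> (nat \<Rightarrow> real \<Rightarrow> complex) \<Rightarrow> nat \<times> real \<Rightarrow> nat \<times> real" where
  "partner k \<gamma> p = (THE q. q \<in> preim k \<gamma> (\<gamma> (fst p) (snd p)) \<and> q \<noteq> p)"

definition xsign :: "nat \<Rightarrow> (nat \<Rightarrow> real \<Rightarrow> complex) \<Rightarrow> (complex \<Rightarrow> xing) \<Rightarrow> complex \<Rightarrow> int" where
  "xsign k \<gamma> dec z = (case dec z of
      Classical ov \<Rightarrow> (if cross2 (tangent \<gamma> ov) (tangent \<gamma> (partner k \<gamma> ov)) > 0 then 1 else -1)
    | _ \<Rightarrow> 0)"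

definition nvcross :: "nat \<Rightarrow> (nat \<Rightarrow> real \<Rightarrow> complex) \<Rightarrow> (complex \<Rightarrow> xing) \<Rightarrow> complex set" where
  "nvcross k \<gamma> dec = {z \<in> dpoints k \<gamma>. dec z \<noteq> Virtual}"

definition passages :: "nat \<Rightarrow> (nat \<Rightarrow> real \<Rightarrow> complex) \<Rightarrow> (complex \<Rightarrow> xing) \<Rightarrow> (nat \<times> real) set" where
  "passages k \<gamma> dec = {(j,t). j < k \<and> t \<in> {0..<1} \<and> \<gamma> j t \<in> nvcross k \<gamma> dec}"

(* forward parameter distance on the circle, in (0,1] for s,t in [0,1) *)
definition fdist :: "real \<Rightarrow> real \<Rightarrow> real" where
  "fdist s t = (if t \<le> s then t - s + 1 else t - s)"

definition next_pass :: "nat \<Rightarrow> (nat \<Rightarrow> real \<Rightarrow> complex) \<Rightarrow> (complex \<Rightarrow> xing) \<Rightarrow> nat \<times> real \<Rightarrow> nat \<times> real" where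
  "next_pass k \<gamma> dec p =
     (fst p, arg_min (fdist (snd p)) (\<lambda>t. (fst p, t) \<in> passages k \<gamma> dec))"

(* The arcs of S_0 are indexed by their starting passage.  With the oriented
   resolution at every classical/singular crossing, the arc arriving at the
   passage q continues with the arc leaving from the other passage of the
   same crossing. *)
definition s0_succ :: "nat \<Rightarrow> (nat \<Rightarrow> real \<Rightarrow> complex) \<Rightarrow> (complex \<Rightarrow> xing) \<Rightarrow> nat \<times> real \<Rightarrow> nat \<times> real" where
  "s0_succ k \<gamma> dec p = partner k \<gamma> (next_pass k \<gamma> dec p)"

(* ||S_0||: closed curves made of arcs (orbits of s0_succ), plus the
   components carrying no classical/singular crossing *)
definition s0_curves :: "nat \<Rightarrow> (nat \<Rightarrow> real \<Rightarrow> complex) \<Rightarrow> (complex \<Rightarrow> xing) \<Rightarrow> nat" where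
  "s0_curves k \<gamma> dec =
     card {{(s0_succ k \<gamma> dec ^^ n) p | n. True} | p. p \<in> passages k \<gamma> dec}
     + card {j. j < k \<and> (\<forall>t. (j,t) \<notin> passages k \<gamma> dec)}"

definition s0_a :: "nat \<Rightarrow> (nat \<Rightarrow> real \<Rightarrow> complex) \<Rightarrow> (complex \<Rightarrow> xing) \<Rightarrow> int" where
  "s0_a k \<gamma> dec = int (card {z \<in> dpoints k \<gamma>. xsign k \<gamma> dec z = -1})
                   - int (card {z \<in> dpoints k \<gamma>. xsign k \<gamma> dec z = 1})"

definition s0_alpha :: "nat \<Rightarrow> (nat \<Rightarrow> real \<Rightarrow> complex) \<Rightarrow> (complex \<Rightarrow> xing) \<Rightarrow> nat" where
  "s0_alpha k \<gamma> dec = card {z \<in> dpoints k \<gamma>. dec z = Singular}"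

(* Laurent polynomials in A as integer Laurent series; A = fls_X *)
abbreviation Apow :: "int \<Rightarrow> int fls" where
  "Apow i \<equiv> fls_X_intpow i"

(* weighted state contribution without the h factor
   A^(2a+4b) (-A^2-A^-2)^(alpha+||S||) (-A^4-A^-4)^beta *)
definition state_weight :: "int \<Rightarrow> int \<Rightarrow> nat \<Rightarrow> nat \<Rightarrow> nat \<Rightarrow> int fls" where
  "state_weight a b al be n =
     Apow (2*a + 4*b) * (- Apow 2 - Apow (-2)) ^ (al + n) * (- Apow 4 - Apow (-4)) ^ be"

(* Rbar(S_0): b = beta = 0 and i(S_0) = 1, so h^((1-i)/2) = 1 *)
definition Rbar_S0 :: "nat \<Rightarrow> (nat \<Rightarrow> real \<Rightarrow> complex) \<Rightarrow> (complex \<Rightarrow> xing) \<Rightarrow> int fls" where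
  "Rbar_S0 k \<gamma> dec = state_weight (s0_a k \<gamma> dec) 0 (s0_alpha k \<gamma> dec) 0 (s0_curves k \<gamma> dec)"

definition in_A4_coset :: "int fls \<Rightarrow> int \<Rightarrow> bool" where
  "in_A4_coset R m \<longleftrightarrow>
     (\<exists>c :: int \<Rightarrow> int. finite {i. c i \<noteq> 0} \<and>
        R = (\<Sum>i \<in> {i. c i \<noteq> 0}. fls_const (c i) * Apow (4*i)) * Apow m)"

end

theory Submission
  imports Defs "HOL-Combinatorics.Orbits" "HOL-Combinatorics.Permutations"
begin

lemma orbit_eq_of_mem:
  assumes "permutation f" "y \<in> orbit f x" shows "orbit f y = orbit f x"
proof
  show "orbit f y \<subseteq> orbit f x" using assms(2) orbit_trans by fast
  have "x \<in> orbit f y" using orbit_swap[OF permutation_self_in_orbit[OF assms(1)] assms(2)] .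
  then show "orbit f x \<subseteq> orbit f y" using orbit_trans by fast
qed

lemma orbit_bypass:
  assumes inj: "inj f" and fx: "f x \<noteq> x" and yx: "y \<noteq> x"
  shows "orbit (Transposition.transpose x (f x) \<circ> f) y = orbit f y - {x}"
proof -
  define h where "h = Transposition.transpose x (f x) \<circ> f"
  have hz: "h z = (if f z = x then f x else if z = x then x else f z)" for z
    by (auto simp: h_def transpose_def inj_eq[OF inj])
  have 1: "z \<in> orbit f y \<and> z \<noteq> x" if "z \<in> orbit h y" for z
    using that
  proof induction
    case base
    then show ?case using fx yx by (auto simp: hz intro: orbit.intros)
  next
    case (step z)
    then show ?case using fx by (auto simp: hz intro: orbit.intros)
  qed
  have 2: "(z \<noteq> x \<longrightarrow> z \<in> orbit h y) \<and> (z = x \<longrightarrow> f x \<in> orbit h y)" if "z \<in> orbit f y" for z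
    using that
  proof induction
    case base
    have "h y \<in> orbit h y" by (rule orbit.base)
    then show ?case using fx yx by (auto simp: hz[of y] split: if_splits)
  next
    case (step z)
    show ?case
    proof (cases "z = x")
      case True
      then show ?thesis using step fx by auto
    next
      case False
      then have zin: "z \<in> orbit h y" using step by auto
      have "h z \<in> orbit h y" using zin by (rule orbit.step)
      then show ?thesis using False by (auto simp: hz[of z] split: if_splits)
    qed
  qed
  show ?thesis unfolding h_def[symmetric] using 1 2 by blast
qed

lemma sign_orbits:
  assumes "finite X" "f permutes X"
  shows "sign f * (-1) ^ card (orbit f ` X) = (-1::int) ^ card X"
  using assms
proof (induction "card X" arbitrary: X f)
  case 0
  then have "X = {}" by simp
  then show ?case using 0 by simp
next
  case (Suc n)
  then obtain x where x: "x \<in> X" by fastforce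
  have perm: "permutation f" using Suc.prems permutation_permutes by blast
  have cardX: "card (X - {x}) = n" using Suc.hyps(2) x Suc.prems(1) by simp
  show ?case
  proof (cases "f x = x")
    case True
    have p2: "f permutes (X - {x})"
      using Suc.prems(2) True by (rule_tac permutes_superset) auto
    have IH: "sign f * (-1) ^ card (orbit f ` (X - {x})) = (-1::int) ^ n"
      using Suc.hyps(1)[OF cardX[symmetric] _ p2] Suc.prems(1) cardX by simp
    have ox: "orbit f x = {x}" using True orbit_eq_singleton_iff by metis
    have notin: "{x} \<notin> orbit f ` (X - {x})"
    proof
      assume "{x} \<in> orbit f ` (X - {x})"
      then obtain y where "y \<in> X - {x}" "orbit f y = {x}" by auto
      then show False using permutation_self_in_orbit[OF perm, of y] by auto
    qed
    have "orbit f ` X = insert {x} (orbit f ` (X - {x}))" using x ox by blast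
    then have "card (orbit f ` X) = Suc (card (orbit f ` (X - {x})))"
      using notin Suc.prems(1) by simp
    then show ?thesis using IH Suc.hyps(2)[symmetric] by simp
  next
    case False
    define h where "h = Transposition.transpose x (f x) \<circ> f"
    have fxX: "f x \<in> X" using Suc.prems(2) x permutes_in_image by metis
    have hp: "h permutes X" unfolding h_def
      using Suc.prems(2) permutes_swap_id[OF x fxX] by (rule permutes_compose)
    have hx: "h x = x" by (simp add: h_def)
    have p2: "h permutes (X - {x})"
      using hp hx by (rule_tac permutes_superset) auto
    have IH: "sign h * (-1) ^ card (orbit h ` (X - {x})) = (-1::int) ^ n"
      using Suc.hyps(1)[OF cardX[symmetric] _ p2] Suc.prems(1) cardX by simp
    have sh: "sign h = - sign f" unfolding h_def
      using sign_compose[OF permutation_swap_id perm] False by (simp add: sign_swap_id)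
    have injf: "inj f" using Suc.prems(2) permutes_inj by blast
    have ob: "orbit h y = orbit f y - {x}" if "y \<noteq> x" for y
      unfolding h_def using orbit_bypass[OF injf False that] .
    have "orbit h ` (X - {x}) = (\<lambda>S. S - {x}) ` (orbit f ` (X - {x}))"
      using ob by auto
    also have "orbit f ` (X - {x}) = orbit f ` X"
    proof -
      have "orbit f x = orbit f (f x)" using permutation_orbit_step[OF perm] by simp
      moreover have "f x \<in> X - {x}" using fxX False by simp
      ultimately show ?thesis using x by blast
    qed
    finally have e: "orbit h ` (X - {x}) = (\<lambda>S. S - {x}) ` (orbit f ` X)" .
    have "inj_on (\<lambda>S. S - {x}) (orbit f ` X)"
    proof (rule inj_onI)
      fix A B assume A: "A \<in> orbit f ` X" and B: "B \<in> orbit f ` X" and eq: "A - {x} = B - {x}"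
      have key: "\<exists>w. w \<in> C - {x} \<and> C = orbit f w" if CX: "C \<in> orbit f ` X" for C
      proof -
        obtain y where y: "C = orbit f y" using CX by auto
        show ?thesis
        proof (cases "y = x")
          case True
          then show ?thesis using y False permutation_orbit_step[OF perm, of x]
            by (auto intro!: exI[of _ "f x"] orbit.base)
        next
          case False
          then show ?thesis using y permutation_self_in_orbit[OF perm, of y] by auto
        qed
      qed
      obtain w where w: "w \<in> A - {x}" "A = orbit f w" using key[OF A] by blast
      obtain v where v: "B = orbit f v" using B by auto
      have "w \<in> orbit f v" using w eq v by auto
      then show "A = B" using orbit_eq_of_mem[OF perm] w v by simp
    qed
    then have "card (orbit h ` (X - {x})) = card (orbit f ` X)"
      using e card_image by metis
    then show ?thesis using IH sh Suc.hyps(2)[symmetric] by simp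
  qed
qed


lemma Apow_mult: "Apow i * Apow j = Apow (i + j)"
  by (rule fls_X_intpow_times_fls_X_intpow)

lemma base_factor: "- Apow 2 - Apow (-2) = - (Apow (-2) * (1 + Apow 4))"
proof -
  have h: "Apow (-2) * Apow 4 = Apow 2" using Apow_mult[of "-2" 4] by simp
  have "- (Apow (-2) * (1 + Apow 4)) = - Apow (-2) - Apow (-2) * Apow 4"
    by (simp only: distrib_left mult_1_right minus_add_distrib diff_conv_add_uminus)
  then show ?thesis unfolding h by (simp only: diff_conv_add_uminus add.commute)
qed

lemma in_coset:
  fixes a :: int and m :: nat and k :: int
  assumes "even (a + int m - k)"
  shows "in_A4_coset (Apow (2*a) * (- Apow 2 - Apow (-2)) ^ m) (2*k)"
proof -
  obtain e where e: "a - int m - k = 2 * e"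
    using assms by (metis add_diff_eq diff_add_cancel dvd_def even_add mult_2 even_mult_iff)
  define c where "c i = (if e \<le> i \<and> i \<le> e + int m then (-1)^m * int (m choose nat (i - e)) else 0)" for i
  have supp: "{i. c i \<noteq> 0} = {e..e + int m}"
    by (auto simp: c_def)
  have "Apow (2*a) * (- Apow 2 - Apow (-2)) ^ m
        = Apow (2*a) * ((-1)^m * (Apow (-2))^m * (1 + Apow 4)^m)"
    unfolding base_factor power_minus[of "Apow (-2) * (1 + Apow 4)"] power_mult_distrib by (simp only: mult.assoc)
  also have "(Apow (-2))^m = Apow (int m * -2)" by (rule fls_X_intpow_power)
  also have "(1 + Apow 4)^m = (\<Sum>j\<le>m. of_nat (m choose j) * Apow (int j * 4))"
    by (simp only: add.commute[of 1] binomial_ring power_one mult_1_right fls_X_intpow_power)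
  finally have L: "Apow (2*a) * (- Apow 2 - Apow (-2)) ^ m =
     (\<Sum>j\<le>m. Apow (2*a) * ((-1)^m * Apow (int m * -2) * (of_nat (m choose j) * Apow (int j * 4))))"
    by (simp only: sum_distrib_left)
  have T: "Apow (2*a) * ((-1)^m * Apow (int m * -2) * (of_nat (m choose j) * Apow (int j * 4)))
     = fls_const ((-1)^m * int (m choose j)) * Apow (4 * (e + int j)) * Apow (2*k)" for j
  proof -
    have "Apow (2*a) * ((-1)^m * Apow (int m * -2) * (of_nat (m choose j) * Apow (int j * 4)))
       = fls_const ((-1)^m * int (m choose j)) * (Apow (2*a) * Apow (int m * -2) * Apow (int j * 4))"
      by (simp only: fls_of_nat fls_const_power fls_const_uminus fls_const_1 fls_const_mult_const[symmetric] of_int_of_nat_eq mult_ac)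
    also have "Apow (2*a) * Apow (int m * -2) * Apow (int j * 4) = Apow (4 * (e + int j)) * Apow (2*k)"
    proof -
      have eq: "2*a + int m * -2 + int j * 4 = 4 * (e + int j) + 2*k" using e by (simp add: algebra_simps)
      show ?thesis unfolding Apow_mult by (simp only: eq)
    qed
    finally show ?thesis by (simp add: mult.assoc)
  qed
  have R: "Apow (2*a) * (- Apow 2 - Apow (-2)) ^ m =
     (\<Sum>j\<le>m. fls_const ((-1)^m * int (m choose j)) * Apow (4 * (e + int j))) * Apow (2*k)"
    unfolding L T by (simp add: sum_distrib_right)
  have "(\<Sum>i\<in>{e..e + int m}. fls_const (c i) * Apow (4*i)) =
        (\<Sum>j\<le>m. fls_const ((-1)^m * int (m choose j)) * Apow (4 * (e + int j)))"
  proof -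
    have im: "{e..e + int m} = (\<lambda>j. e + int j) ` {..m}"
      by (auto simp: image_iff intro!: bexI[of _ "nat (x - e)" for x])
    have "inj_on (\<lambda>j. e + int j) {..m}" by (auto simp: inj_on_def)
    then show ?thesis unfolding im by (simp add: sum.reindex c_def)
  qed
  then show ?thesis unfolding in_A4_coset_def supp R
    by (intro exI[of _ c]) (simp add: supp)
qed


definition dd :: "real \<Rightarrow> real \<Rightarrow> real" where
  "dd s t = (if t < s then t - s + 1 else t - s)"

lemma fdist_inj:
  assumes "s \<in> {0..<1}" "t1 \<in> {0..<1}" "t2 \<in> {0..<1}" "fdist s t1 = fdist s t2"
  shows "t1 = t2"
  using assms unfolding fdist_def by (auto split: if_splits)

lemma fdist_next_inj:
  assumes "s \<in> {0..<1}" "s' \<in> {0..<1}" "u \<in> {0..<1}" "s \<noteq> s'"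
    "fdist s u \<le> fdist s s'" "fdist s' u \<le> fdist s' s"
  shows False
  using assms unfolding fdist_def by (auto split: if_splits)

lemma dd_between:
  assumes "s \<in> {0..<1}" "w \<in> {0..<1}" "t \<in> {0..<1}" "u \<in> {0..<1}"
    "dd s w < dd s t" "fdist w u \<le> fdist w t" "u \<noteq> t"
  shows "dd s w < dd s u \<and> dd s u < dd s t"
  using assms unfolding fdist_def dd_def by (auto split: if_splits)

lemma dd_self: "dd s s = 0" by (simp add: dd_def)
lemma dd_pos: assumes "s \<in> {0..<1}" "t \<in> {0..<1}" "t \<noteq> s" shows "0 < dd s t"
  using assms unfolding dd_def by auto


context
  fixes k :: nat and \<gamma> :: "nat \<Rightarrow> real \<Rightarrow> complex" and dec :: "complex \<Rightarrow> xing"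
  assumes vs: "vs_diagram k \<gamma> dec"
begin

abbreviation "PP \<equiv> passages k \<gamma> dec"
abbreviation "NV \<equiv> nvcross k \<gamma> dec"
abbreviation "pt p \<equiv> \<gamma> (fst p) (snd p)"

lemma fin_pre: "finite (preim k \<gamma> z)" and card_pre: "card (preim k \<gamma> z) \<le> 2"
  and fin_dp: "finite (dpoints k \<gamma>)"
  using vs unfolding vs_diagram_def by auto

lemma pre_pt: "q \<in> preim k \<gamma> z \<Longrightarrow> pt q = z"
  by (auto simp: preim_def)

lemma PP_iff: "p \<in> PP \<longleftrightarrow> p \<in> preim k \<gamma> (pt p) \<and> pt p \<in> NV"
  by (cases p) (auto simp: passages_def preim_def)

lemma PP_UN: "PP = (\<Union>z\<in>NV. preim k \<gamma> z)"
  using PP_iff pre_pt by blast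

lemma fin_NV: "finite NV"
  using fin_dp by (simp add: nvcross_def)

lemma fin_PP: "finite PP"
  unfolding PP_UN using fin_NV fin_pre by blast

lemma card_pre_NV: "z \<in> NV \<Longrightarrow> card (preim k \<gamma> z) = 2"
  by (simp add: nvcross_def dpoints_def)

lemma card_PP: "card PP = 2 * card NV"
proof -
  have "card PP = (\<Sum>z\<in>NV. card (preim k \<gamma> z))"
    unfolding PP_UN
    by (rule card_UN_disjoint[OF fin_NV]) (auto simp: fin_pre dest: pre_pt)
  also have "\<dots> = (\<Sum>z\<in>NV. 2)" using card_pre_NV by simp
  finally show ?thesis by simp
qed

lemma pre_pair:
  assumes "p \<in> PP"
  obtains q where "preim k \<gamma> (pt p) = {p, q}" "q \<noteq> p"
proof -
  have "pt p \<in> NV" "p \<in> preim k \<gamma> (pt p)" using assms PP_iff by auto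
  then have "card (preim k \<gamma> (pt p)) = 2" using card_pre_NV by simp
  then obtain x y where xy: "preim k \<gamma> (pt p) = {x, y}" "x \<noteq> y" by (auto simp: card_2_iff)
  then show ?thesis using that \<open>p \<in> preim k \<gamma> (pt p)\<close> by (metis insertE insert_commute singletonD)
qed

lemma partner_props:
  assumes "p \<in> PP"
  shows "preim k \<gamma> (pt p) = {p, partner k \<gamma> p}" "partner k \<gamma> p \<noteq> p"
    "partner k \<gamma> p \<in> PP" "partner k \<gamma> (partner k \<gamma> p) = p"
proof -
  obtain q where q: "preim k \<gamma> (pt p) = {p, q}" "q \<noteq> p" using pre_pair[OF assms] .
  have pq: "partner k \<gamma> p = q"
    unfolding partner_def using q by (rule_tac the_equality) auto
  show 1: "preim k \<gamma> (pt p) = {p, partner k \<gamma> p}" "partner k \<gamma> p \<noteq> p" using q pq by auto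
  have ptq: "pt q = pt p" using q pre_pt by blast
  show 3: "partner k \<gamma> p \<in> PP" using assms q pq ptq PP_iff by auto
  have "partner k \<gamma> q = p"
    unfolding partner_def using q ptq by (rule_tac the_equality) auto
  then show "partner k \<gamma> (partner k \<gamma> p) = p" using pq by simp
qed

definition gg where "gg x = (if x \<in> PP then partner k \<gamma> x else x)"

lemma gg_permutes: "gg permutes PP"
proof (rule bij_imp_permutes)
  show "bij_betw gg PP PP"
    by (rule bij_betw_byWitness[where f'=gg]) (auto simp: gg_def partner_props)
qed (simp add: gg_def)

lemma orbit_gg: "p \<in> PP \<Longrightarrow> orbit gg p = preim k \<gamma> (pt p)"
proof -
  assume p: "p \<in> PP"
  have "(gg ^^ 2) p = p" using p by (simp add: gg_def partner_props numeral_2_eq_2)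
  then have "orbit gg p = {(gg ^^ m) p | m. m < 2}" by (rule orbit_altdef_bounded) simp
  also have "\<dots> = (\<lambda>m. (gg ^^ m) p) ` {..<2}" by auto
  also have "{..<2::nat} = {0, 1}" by auto
  also have "(\<lambda>m. (gg ^^ m) p) ` {0, 1} = {p, gg p}" by simp
  also have "gg p = partner k \<gamma> p" using p by (simp add: gg_def)
  finally show ?thesis using p by (simp add: partner_props)
qed

lemma card_orbit_gg: "card (orbit gg ` PP) = card NV"
proof -
  have "orbit gg ` PP = preim k \<gamma> ` NV"
  proof
    show "orbit gg ` PP \<subseteq> preim k \<gamma> ` NV" using orbit_gg PP_iff by auto
    show "preim k \<gamma> ` NV \<subseteq> orbit gg ` PP"
    proof
      fix S assume "S \<in> preim k \<gamma> ` NV"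
      then obtain z where z: "z \<in> NV" "S = preim k \<gamma> z" by auto
      then have "card S = 2" using card_pre_NV by simp
      then obtain p where "p \<in> S" by (auto simp: card_2_iff)
      then have "p \<in> PP" "pt p = z" using z PP_UN pre_pt by auto
      then show "S \<in> orbit gg ` PP" using orbit_gg z by auto
    qed
  qed
  moreover have "inj_on (preim k \<gamma>) NV"
  proof (rule inj_onI)
    fix z w assume "z \<in> NV" "w \<in> NV" "preim k \<gamma> z = preim k \<gamma> w"
    moreover obtain p where "p \<in> preim k \<gamma> z"
      using card_pre_NV[OF \<open>z \<in> NV\<close>] by (auto simp: card_2_iff)
    ultimately show "z = w" using pre_pt by metis
  qed
  ultimately show ?thesis by (simp add: card_image)
qed

lemma PP_range: "p \<in> PP \<Longrightarrow> snd p \<in> {0..<1} \<and> fst p < k"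
  by (cases p) (auto simp: passages_def)

lemma T_fin: "finite {t. (j, t) \<in> PP}"
proof (rule finite_subset[of _ "snd ` PP"])
  show "{t. (j, t) \<in> PP} \<subseteq> snd ` PP" by force
qed (simp add: fin_PP)

lemma next_props:
  assumes "p \<in> PP"
  shows "fst (next_pass k \<gamma> dec p) = fst p" "next_pass k \<gamma> dec p \<in> PP"
    "\<And>t. (fst p, t) \<in> PP \<Longrightarrow> fdist (snd p) (snd (next_pass k \<gamma> dec p)) \<le> fdist (snd p) t"
proof -
  obtain j s where p: "p = (j, s)" by force
  let ?S = "{t. (j, t) \<in> PP}"
  have "?S \<noteq> {}" using assms p by auto
  then obtain x where "is_arg_min (fdist s) (\<lambda>x. x \<in> ?S) x"
    using ex_is_arg_min_if_finite[OF T_fin] by blast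
  then have ex: "\<exists>x. is_arg_min (fdist s) (\<lambda>t. (j, t) \<in> PP) x" by auto
  define u where "u = arg_min (fdist s) (\<lambda>t. (j, t) \<in> PP)"
  have "is_arg_min (fdist s) (\<lambda>t. (j, t) \<in> PP) u"
    unfolding u_def arg_min_def by (rule someI_ex[OF ex])
  then have u: "(j, u) \<in> PP" "\<And>t. (j, t) \<in> PP \<Longrightarrow> fdist s u \<le> fdist s t"
    by (auto simp: is_arg_min_linorder)
  have np: "next_pass k \<gamma> dec p = (j, u)" by (simp add: next_pass_def p u_def)
  show "fst (next_pass k \<gamma> dec p) = fst p" "next_pass k \<gamma> dec p \<in> PP"
    "\<And>t. (fst p, t) \<in> PP \<Longrightarrow> fdist (snd p) (snd (next_pass k \<gamma> dec p)) \<le> fdist (snd p) t"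
    using u np p by auto
qed

definition nx where "nx x = (if x \<in> PP then next_pass k \<gamma> dec x else x)"

lemma nx_inj: "inj_on nx PP"
proof (rule inj_onI)
  fix p q assume p: "p \<in> PP" and q: "q \<in> PP" and eq: "nx p = nx q"
  then have eq': "next_pass k \<gamma> dec p = next_pass k \<gamma> dec q" by (simp add: nx_def)
  have fj: "fst p = fst q" using next_props(1)[OF p] next_props(1)[OF q] eq' by simp
  show "p = q"
  proof (rule ccontr)
    assume "p \<noteq> q"
    then have ne: "snd p \<noteq> snd q" using fj by (simp add: prod_eq_iff)
    have "(fst p, snd q) \<in> PP" using q fj by simp
    then have 1: "fdist (snd p) (snd (next_pass k \<gamma> dec p)) \<le> fdist (snd p) (snd q)"
      using next_props(3)[OF p] by blast
    have "(fst q, snd p) \<in> PP" using p fj[symmetric] by simp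
    then have 2: "fdist (snd q) (snd (next_pass k \<gamma> dec p)) \<le> fdist (snd q) (snd p)"
      using next_props(3)[OF q] eq' by simp
    show False
      using fdist_next_inj[OF _ _ _ ne 1 2] PP_range[OF p] PP_range[OF q]
        PP_range[OF next_props(2)[OF p]] by blast
  qed
qed

lemma nx_permutes: "nx permutes PP"
proof (rule bij_imp_permutes)
  have "nx ` PP \<subseteq> PP" using next_props(2) by (auto simp: nx_def)
  then have "nx ` PP = PP" using endo_inj_surj[OF fin_PP _ nx_inj] by blast
  then show "bij_betw nx PP PP" using nx_inj by (simp add: bij_betw_def)
qed (simp add: nx_def)

lemma orbit_nx_sub:
  assumes p: "p \<in> PP"
  shows "orbit nx p \<subseteq> {q \<in> PP. fst q = fst p}"
proof
  fix q assume "q \<in> orbit nx p"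
  then show "q \<in> {q \<in> PP. fst q = fst p}"
  proof induction
    case base then show ?case using p next_props[OF p] by (simp add: nx_def)
  next
    case (step y) then show ?case using next_props[of y] by (simp add: nx_def)
  qed
qed

lemma orbit_nx:
  assumes p: "p \<in> PP"
  shows "orbit nx p = {q \<in> PP. fst q = fst p}"
proof
  show "orbit nx p \<subseteq> {q \<in> PP. fst q = fst p}" using orbit_nx_sub[OF p] .
next
  obtain j s where ps: "p = (j, s)" by force
  have perm: "permutation nx" using nx_permutes fin_PP permutation_permutes by blast
  define Ob where "Ob = orbit nx p"
  have pO: "p \<in> Ob" unfolding Ob_def by (rule permutation_self_in_orbit[OF perm])
  have Ostep: "nx x \<in> Ob" if "x \<in> Ob" for x using that unfolding Ob_def by (rule orbit.step)
  have OP: "Ob \<subseteq> {q \<in> PP. fst q = fst p}"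
    unfolding Ob_def using orbit_nx_sub[OF p] by simp
  show "{q \<in> PP. fst q = fst p} \<subseteq> orbit nx p"
  proof (rule ccontr)
    assume "\<not> ?thesis"
    define B where "B = {t. (j, t) \<in> PP \<and> (j, t) \<notin> Ob}"
    have Bne: "B \<noteq> {}" using \<open>\<not> _\<close> ps unfolding B_def Ob_def by auto
    have Bfin: "finite B" using T_fin[of j] by (rule finite_subset[rotated]) (auto simp: B_def)
    obtain t where "is_arg_min (dd s) (\<lambda>x. x \<in> B) t"
      using ex_is_arg_min_if_finite[OF Bfin Bne] by blast
    then have t: "t \<in> B" "\<And>t'. t' \<in> B \<Longrightarrow> dd s t \<le> dd s t'"
      by (auto simp: is_arg_min_linorder)
    define W where "W = {w. (j, w) \<in> Ob \<and> dd s w < dd s t}"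
    have sR: "s \<in> {0..<1}" using PP_range[OF p] ps by simp
    have tR: "t \<in> {0..<1}" using t(1) PP_range unfolding B_def by fastforce
    have "t \<noteq> s" using t(1) pO ps unfolding B_def by auto
    then have "s \<in> W" using pO ps dd_pos[OF sR tR] by (simp add: W_def dd_self)
    then have Wne: "W \<noteq> {}" by blast
    have Wfin: "finite W" using T_fin[of j] OP ps by (rule_tac finite_subset[rotated]) (auto simp: W_def)
    obtain w where "is_arg_min (\<lambda>x. - dd s x) (\<lambda>x. x \<in> W) w"
      using ex_is_arg_min_if_finite[OF Wfin Wne] by blast
    then have w: "w \<in> W" "\<And>w'. w' \<in> W \<Longrightarrow> dd s w' \<le> dd s w"
      by (auto simp: is_arg_min_linorder)
    have jwP: "(j, w) \<in> PP" using w(1) OP ps unfolding W_def by auto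
    have wR: "w \<in> {0..<1}" using PP_range[OF jwP] by simp
    obtain u where u: "next_pass k \<gamma> dec (j, w) = (j, u)"
      using next_props(1)[OF jwP] by (metis fst_conv prod.collapse)
    have juP: "(j, u) \<in> PP" using next_props(2)[OF jwP] u by simp
    have uR: "u \<in> {0..<1}" using PP_range[OF juP] by simp
    have juO: "(j, u) \<in> Ob" using Ostep[of "(j, w)"] w(1) jwP u unfolding W_def by (simp add: nx_def)
    have jtP: "(j, t) \<in> PP" using t(1) B_def by simp
    have fle: "fdist w u \<le> fdist w t" using next_props(3)[OF jwP, of t] jtP u by simp
    have ut: "u \<noteq> t" using juO t(1) B_def by auto
    have "dd s w < dd s u \<and> dd s u < dd s t"
      using dd_between[OF sR wR tR uR _ fle ut] w(1) W_def by simp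
    then have "u \<in> W" "dd s w < dd s u" using juO W_def by auto
    then show False using w(2) by force
  qed
qed

lemma card_orbit_nx: "card (orbit nx ` PP) = card {j. j < k \<and> (\<exists>t. (j, t) \<in> PP)}"
proof -
  define J where "J = {j. j < k \<and> (\<exists>t. (j, t) \<in> PP)}"
  have "orbit nx ` PP = (\<lambda>j. {q \<in> PP. fst q = j}) ` J"
  proof
    show "orbit nx ` PP \<subseteq> (\<lambda>j. {q \<in> PP. fst q = j}) ` J"
      using orbit_nx PP_range by (force simp: J_def)
    show "(\<lambda>j. {q \<in> PP. fst q = j}) ` J \<subseteq> orbit nx ` PP"
    proof
      fix S assume "S \<in> (\<lambda>j. {q \<in> PP. fst q = j}) ` J"
      then obtain j t where "S = {q \<in> PP. fst q = j}" "(j, t) \<in> PP" by (auto simp: J_def)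
      then show "S \<in> orbit nx ` PP" using orbit_nx[of "(j, t)"] by force
    qed
  qed
  moreover have "inj_on (\<lambda>j. {q \<in> PP. fst q = j}) J"
  proof (rule inj_onI)
    fix i j assume "i \<in> J" "j \<in> J" and eq: "{q \<in> PP. fst q = i} = {q \<in> PP. fst q = j}"
    then obtain t where "(i, t) \<in> PP" by (auto simp: J_def)
    then have "(i, t) \<in> {q \<in> PP. fst q = j}" using eq by auto
    then show "i = j" by simp
  qed
  ultimately show ?thesis unfolding J_def[symmetric] by (simp add: card_image)
qed

definition hh where "hh = gg \<circ> nx"

lemma hh_permutes: "hh permutes PP"
  unfolding hh_def by (rule permutes_compose[OF nx_permutes gg_permutes])

lemma s0_eq: "p \<in> PP \<Longrightarrow> s0_succ k \<gamma> dec p = hh p"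
  using next_props(2)[of p] by (simp add: s0_succ_def hh_def gg_def nx_def)

lemma s0_orbits: "{{(s0_succ k \<gamma> dec ^^ n) p | n. True} | p. p \<in> PP} = orbit hh ` PP"
proof -
  have perm: "permutation hh" using hh_permutes fin_PP permutation_permutes by blast
  have it: "(s0_succ k \<gamma> dec ^^ n) p = (hh ^^ n) p \<and> (hh ^^ n) p \<in> PP" if "p \<in> PP" for p n
  proof (induction n)
    case 0 then show ?case using that by simp
  next
    case (Suc n) then show ?case
      using s0_eq permutes_in_image[OF hh_permutes] by simp
  qed
  have e: "{(s0_succ k \<gamma> dec ^^ n) p | n. True} = orbit hh p" if "p \<in> PP" for p
    using it[OF that] orbit_altdef_permutation[OF perm, of p] by simp
  have "{{(s0_succ k \<gamma> dec ^^ n) p | n. True} | p. p \<in> PP} = (\<lambda>p. {(s0_succ k \<gamma> dec ^^ n) p | n. True}) ` PP"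
    by blast
  also have "\<dots> = orbit hh ` PP" by (rule image_cong[OF refl e])
  finally show ?thesis .
qed

lemma card_nv_split:
  "card NV = card {z \<in> dpoints k \<gamma>. xsign k \<gamma> dec z = -1}
     + card {z \<in> dpoints k \<gamma>. xsign k \<gamma> dec z = 1} + s0_alpha k \<gamma> dec"
proof -
  let ?N = "{z \<in> dpoints k \<gamma>. xsign k \<gamma> dec z = -1}"
  let ?Q = "{z \<in> dpoints k \<gamma>. xsign k \<gamma> dec z = 1}"
  let ?S = "{z \<in> dpoints k \<gamma>. dec z = Singular}"
  have xs: "xsign k \<gamma> dec z = (case dec z of Classical ov \<Rightarrow> (if cross2 (tangent \<gamma> ov) (tangent \<gamma> (partner k \<gamma> ov)) > 0 then 1 else -1) | _ \<Rightarrow> 0)" for z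
    by (simp add: xsign_def)
  have "z \<in> NV \<longleftrightarrow> z \<in> ?N \<union> ?Q \<union> ?S" for z
    by (cases "dec z") (auto simp: nvcross_def xsign_def)
  then have "NV = ?N \<union> ?Q \<union> ?S" by blast
  moreover have "?N \<inter> ?Q = {}" by auto
  moreover have "(?N \<union> ?Q) \<inter> ?S = {}" by (auto simp: xs)
  moreover have "finite ?N" "finite ?Q" "finite ?S" using fin_dp by auto
  ultimately show ?thesis unfolding s0_alpha_def by (simp add: card_Un_disjoint)
qed

lemma card_comp_split:
  "card {j. j < k \<and> (\<exists>t. (j, t) \<in> PP)} + card {j. j < k \<and> (\<forall>t. (j, t) \<notin> PP)} = k"
proof -
  have "{j. j < k \<and> (\<exists>t. (j, t) \<in> PP)} \<union> {j. j < k \<and> (\<forall>t. (j, t) \<notin> PP)} = {..<k}" by auto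
  then have "card ({j. j < k \<and> (\<exists>t. (j, t) \<in> PP)} \<union> {j. j < k \<and> (\<forall>t. (j, t) \<notin> PP)}) = k" by simp
  then show ?thesis by (subst (asm) card_Un_disjoint) auto
qed

end

theorem lemma4p2:
  fixes k :: nat and \<gamma> :: "nat \<Rightarrow> real \<Rightarrow> complex" and dec :: "complex \<Rightarrow> xing"
  assumes "vs_diagram k \<gamma> dec"
    and "vs_connected k \<gamma>"
  shows "in_A4_coset (Rbar_S0 k \<gamma> dec) (2 * int k)"
proof -
  note vs = assms(1)
  define P where "P = passages k \<gamma> dec"
  have fin: "finite P" unfolding P_def using fin_PP[OF vs] .
  have pg: "gg k \<gamma> dec permutes P" unfolding P_def using gg_permutes[OF vs] .
  have pn: "nx k \<gamma> dec permutes P" unfolding P_def using nx_permutes[OF vs] .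
  have ph: "hh k \<gamma> dec permutes P" unfolding P_def using hh_permutes[OF vs] .
  have sg: "sign (gg k \<gamma> dec) * (-1) ^ card (orbit (gg k \<gamma> dec) ` P) = (-1::int) ^ card P"
    using sign_orbits[OF fin pg] .
  have sn: "sign (nx k \<gamma> dec) * (-1) ^ card (orbit (nx k \<gamma> dec) ` P) = (-1::int) ^ card P"
    using sign_orbits[OF fin pn] .
  have sh: "sign (hh k \<gamma> dec) * (-1) ^ card (orbit (hh k \<gamma> dec) ` P) = (-1::int) ^ card P"
    using sign_orbits[OF fin ph] .
  have shc: "sign (hh k \<gamma> dec) = sign (gg k \<gamma> dec) * sign (nx k \<gamma> dec)"
    unfolding hh_def[OF vs]
    using sign_compose fin pg pn permutation_permutes by blast
  define c where "c = card (nvcross k \<gamma> dec)"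
  have cP: "card P = 2 * c" unfolding P_def c_def using card_PP[OF vs] .
  have cg: "card (orbit (gg k \<gamma> dec) ` P) = c" unfolding P_def c_def using card_orbit_gg[OF vs] .
  define Nn where "Nn = card (orbit (nx k \<gamma> dec) ` P)"
  define Nh where "Nh = card (orbit (hh k \<gamma> dec) ` P)"
  have par: "even (Nh + c + Nn)"
    using sg sn sh shc unfolding cP cg Nn_def[symmetric] Nh_def[symmetric]
    by (simp add: sign_def minus_one_power_iff split: if_splits)
  define J where "J = card {j. j < k \<and> (\<exists>t. (j, t) \<in> P)}"
  define K0 where "K0 = card {j. j < k \<and> (\<forall>t. (j, t) \<notin> P)}"
  have JK: "J + K0 = k" unfolding J_def K0_def P_def using card_comp_split[OF vs] .
  have NnJ: "Nn = J" unfolding Nn_def J_def P_def using card_orbit_nx[OF vs] .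
  have curves: "s0_curves k \<gamma> dec = Nh + K0"
    unfolding s0_curves_def s0_orbits[OF vs] Nh_def K0_def P_def ..
  define neg where "neg = card {z \<in> dpoints k \<gamma>. xsign k \<gamma> dec z = -1}"
  define pos where "pos = card {z \<in> dpoints k \<gamma>. xsign k \<gamma> dec z = 1}"
  have cs: "c = neg + pos + s0_alpha k \<gamma> dec"
    unfolding c_def neg_def pos_def using card_nv_split[OF vs] .
  have a: "s0_a k \<gamma> dec = int neg - int pos" unfolding s0_a_def neg_def pos_def ..
  have ev: "even (s0_a k \<gamma> dec + int (s0_alpha k \<gamma> dec + s0_curves k \<gamma> dec) - int k)"
    unfolding a curves using par JK NnJ cs by presburger
  have R: "Rbar_S0 k \<gamma> dec = Apow (2 * s0_a k \<gamma> dec) * (- Apow 2 - Apow (-2)) ^ (s0_alpha k \<gamma> dec + s0_curves k \<gamma> dec)"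
    unfolding Rbar_S0_def state_weight_def by simp
  show ?thesis unfolding R by (rule in_coset[OF ev])
qed

end
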